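(* Let $\mathcal{H}$ be a $K$-vector space and $\Delta:\mathcal{H}\to\mathcal{H}\otimes\mathcal{H}$ a linear map such that $\Delta^{(2)}=(\mathrm{id}\otimes\tau)\Delta^{(2)}$. Then for every $n\geq 1$ and every $\sigma\in\Sigma_n$, one has $(\mathrm{id}_{\mathcal{H}}\otimes\sigma)\circ\Delta^{(n)}=\Delta^{(n)}$, where $\sigma$ acts on $\mathcal{H}^{\otimes n}$ by permuting the tensor factors; i.e. the last $n$ tensor components of $\Delta^{(n)}(x)\in\mathcal{H}^{\otimes(n+1)}$ are invariant under $\Sigma_n$.
   Context: $K$ is a field of characteristic zero. $\tau$ is the flip $a\otimes b\mapsto b\otimes a$ on $\mathcal{H}\otimes\mathcal{H}$, so $\mathrm{id}\otimes\tau$ flips the last two factors of $\mathcal{H}^{\otimes 3}$. The iterates are defined by $\Delta^{(1)}=\Delta$ and $\Delta^{(n)}=(\Delta\otimes\mathrm{id}^{\otimes(n-1)})\circ\Delta^{(n-1)}:\mathcal{H}\to\mathcal{H}^{\otimes(n+1)}$; in particular $\Delta^{(2)}=(\Delta\otimes\mathrm{id})\Delta$. *)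

theory Defs
  imports Main "HOL-Combinatorics.Combinatorics" "HOL-Library.Function_Algebras"
begin

text \<open>
The free K-vector space on words of vectors is modelled by functions
  F :: 'h list => 'k  with finite support; the basis vector of a word is fbasis w.
A representative of an element of the n-th tensor power is such an F supported on
words of length n.  The n-th tensor power itself is the quotient of this free space
by the span of the multilinearity relations (tensor_rel); two representatives denote
the same tensor iff their difference lies in tensor_null.
\<close>

definition fscale :: "'k::field \<Rightarrow> ('h list \<Rightarrow> 'k) \<Rightarrow> ('h list \<Rightarrow> 'k)" where
  "fscale c F = (\<lambda>w. c * F w)"

definition fbasis :: "'h list \<Rightarrow> ('h list \<Rightarrow> 'k::field)" where
  "fbasis w = (\<lambda>v. if v = w then 1 else 0)"

definition tensor_rep :: "nat \<Rightarrow> ('h list \<Rightarrow> 'k::field) set" where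
  "tensor_rep n = {F. finite {w. F w \<noteq> 0} \<and> (\<forall>w. F w \<noteq> 0 \<longrightarrow> length w = n)}"

definition tensor_rel :: "('k::field \<Rightarrow> 'h::ab_group_add \<Rightarrow> 'h) \<Rightarrow> ('h list \<Rightarrow> 'k) set" where
  "tensor_rel scale =
     {fbasis (xs @ [x + y] @ ys) - fbasis (xs @ [x] @ ys) - fbasis (xs @ [y] @ ys) | xs x y ys. True}
   \<union> {fbasis (xs @ [scale c x] @ ys) - fscale c (fbasis (xs @ [x] @ ys)) | xs c x ys. True}"

definition tensor_null :: "('k::field \<Rightarrow> 'h::ab_group_add \<Rightarrow> 'h) \<Rightarrow> ('h list \<Rightarrow> 'k) set" where
  "tensor_null scale = module.span fscale (tensor_rel scale)"

definition tensor_eq :: "('k::field \<Rightarrow> 'h::ab_group_add \<Rightarrow> 'h) \<Rightarrow> ('h list \<Rightarrow> 'k) \<Rightarrow> ('h list \<Rightarrow> 'k) \<Rightarrow> bool" where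
  "tensor_eq scale F G \<longleftrightarrow> F - G \<in> tensor_null scale"

text \<open>The map  Delta \<otimes> id \<otimes> ... \<otimes> id  on representatives: a basis word x # xs is sent to
  Delta(x) \<otimes> xs, extended linearly.\<close>
definition delta_tensor_id :: "('h \<Rightarrow> ('h list \<Rightarrow> 'k::field)) \<Rightarrow> ('h list \<Rightarrow> 'k) \<Rightarrow> ('h list \<Rightarrow> 'k)" where
  "delta_tensor_id D F = (\<lambda>zs. \<Sum>ws\<in>{ws. F ws \<noteq> 0}.
      F ws * (if ws \<noteq> [] \<and> length zs \<ge> 2 \<and> drop 2 zs = tl ws then D (hd ws) (take 2 zs) else 0))"

definition iter_coprod :: "('h \<Rightarrow> ('h list \<Rightarrow> 'k::field)) \<Rightarrow> nat \<Rightarrow> 'h \<Rightarrow> ('h list \<Rightarrow> 'k)" where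
  "iter_coprod D n x = (delta_tensor_id D ^^ (n - 1)) (D x)"

text \<open>id_H \<otimes> sigma on representatives, sigma a permutation of the last tensor factors
  (indices 0..n-1 of the tail of the word).\<close>
definition id_tensor_perm :: "(nat \<Rightarrow> nat) \<Rightarrow> ('h list \<Rightarrow> 'k::field) \<Rightarrow> ('h list \<Rightarrow> 'k)" where
  "id_tensor_perm \<sigma> F = (\<lambda>zs. if zs = [] then F [] else F (hd zs # permute_list \<sigma> (tl zs)))"

end

theory Submission
  imports Defs
begin


interpretation fm: module "fscale :: 'k::field \<Rightarrow> ('h list \<Rightarrow> 'k) \<Rightarrow> _"
  by standard (auto simp: fscale_def fun_eq_iff algebra_simps)


definition supp :: "('h list \<Rightarrow> 'k::zero) \<Rightarrow> 'h list set" where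
  "supp F = {w. F w \<noteq> 0}"

definition Sx :: "nat \<Rightarrow> 'h list \<Rightarrow> ('h list \<Rightarrow> 'k::zero) \<Rightarrow> ('h list \<Rightarrow> 'k)" where
  "Sx m t K = (\<lambda>zs. if m \<le> length zs \<and> drop m zs = t then K (take m zs) else 0)"

definition linf :: "(('h list \<Rightarrow> 'k::field) \<Rightarrow> ('h list \<Rightarrow> 'k)) \<Rightarrow> bool" where
  "linf L \<longleftrightarrow> (\<forall>F G. finite (supp F) \<longrightarrow> finite (supp G) \<longrightarrow> L (F + G) = L F + L G)
     \<and> (\<forall>c F. finite (supp F) \<longrightarrow> L (fscale c F) = fscale c (L F))"

lemma fscale_apply: "fscale c F w = c * F w" by (simp add: fscale_def)
lemma fbasis_apply: "fbasis w v = (if v = w then 1 else 0)" by (simp add: fbasis_def)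

lemma sum_fun_apply: "(\<Sum>a\<in>A. f a) z = (\<Sum>a\<in>A. f a z)"
  by (induction A rule: infinite_finite_induct) auto

lemma supp_add: "supp (F + G :: 'h list \<Rightarrow> 'k::field) \<subseteq> supp F \<union> supp G" by (auto simp: supp_def)
lemma supp_diff: "supp (F - G :: 'h list \<Rightarrow> 'k::field) \<subseteq> supp F \<union> supp G" by (auto simp: supp_def)
lemma supp_scale: "supp (fscale c (F :: 'h list \<Rightarrow> 'k::field)) \<subseteq> supp F" by (auto simp: supp_def fscale_def)
lemma supp_fbasis: "supp (fbasis w :: 'h list \<Rightarrow> 'k::field) = {w}" by (auto simp: supp_def fbasis_def)
lemma supp_zero [simp]: "supp 0 = {}" by (auto simp: supp_def)

lemma fin_add: "finite (supp (F :: 'h list \<Rightarrow> 'k::field)) \<Longrightarrow> finite (supp G) \<Longrightarrow> finite (supp (F + G))"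
  by (meson finite_UnI finite_subset supp_add)
lemma fin_diff: "finite (supp (F :: 'h list \<Rightarrow> 'k::field)) \<Longrightarrow> finite (supp G) \<Longrightarrow> finite (supp (F - G))"
  by (meson finite_UnI finite_subset supp_diff)
lemma fin_scale: "finite (supp (F :: 'h list \<Rightarrow> 'k::field)) \<Longrightarrow> finite (supp (fscale c F))"
  by (meson finite_subset supp_scale)
lemma fin_fbasis: "finite (supp (fbasis w :: 'h list \<Rightarrow> 'k::field))" by (simp add: supp_fbasis)
lemma fin_sum: "(\<And>a. a \<in> A \<Longrightarrow> finite (supp (X a :: 'h list \<Rightarrow> 'k::field))) \<Longrightarrow> finite (supp (\<Sum>a\<in>A. X a))"
proof (induction A rule: infinite_finite_induct)
  case (insert x F)
  have "sum X (insert x F) = X x + sum X F" using insert.hyps by (simp del: plus_fun_apply)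
  then show ?case using fin_add[of "X x" "sum X F"] insert by (simp del: plus_fun_apply)
qed auto

lemma linf_zero: "linf (L :: ('h list \<Rightarrow> 'k::field) \<Rightarrow> _) \<Longrightarrow> L 0 = 0"
proof -
  assume "linf L"
  have e: "fscale 0 X = 0" for X :: "'h list \<Rightarrow> 'k::field" by (simp add: fun_eq_iff fscale_def)
  have "finite (supp (0 :: 'h list \<Rightarrow> 'k))" by simp
  with \<open>linf L\<close> have "L (fscale 0 0) = fscale 0 (L 0)" unfolding linf_def by blast
  then show ?thesis by (simp only: e)
qed

lemma linf_sum:
  assumes L: "linf L" and fin: "finite A" and X: "\<And>a. a \<in> A \<Longrightarrow> finite (supp (X a))"
  shows "L (\<Sum>a\<in>A. fscale (c a) (X a)) = (\<Sum>a\<in>A. fscale (c a) (L (X a)))"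
  using fin X
proof (induction A rule: finite_induct)
  case empty then show ?case by (simp only: sum.empty linf_zero[OF L])
next
  case (insert x F)
  have f1: "finite (supp (fscale (c x) (X x)))" by (simp add: fin_scale insert.prems)
  have f2: "finite (supp (\<Sum>a\<in>F. fscale (c a) (X a)))" by (intro fin_sum fin_scale insert.prems) auto
  have "L (\<Sum>a\<in>insert x F. fscale (c a) (X a)) = L (fscale (c x) (X x)) + L (\<Sum>a\<in>F. fscale (c a) (X a))"
    using insert.hyps L f1 f2 unfolding linf_def by (simp del: plus_fun_apply)
  also have "\<dots> = fscale (c x) (L (X x)) + (\<Sum>a\<in>F. fscale (c a) (L (X a)))"
    using insert L unfolding linf_def by (simp del: plus_fun_apply)
  finally show ?case using insert.hyps by (simp del: plus_fun_apply)
qed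

lemma linf_diff:
  assumes L: "linf L" and "finite (supp F)" "finite (supp G)"
  shows "L (F - G) = L F - L G"
proof -
  have "F - G = F + fscale (-1) G" by (simp add: fun_eq_iff fscale_def)
  then have "L (F - G) = L F + fscale (-1) (L G)"
    using L assms fin_scale unfolding linf_def by metis
  then show ?thesis by (simp add: fun_eq_iff fscale_def)
qed

lemma rel_cases:
  assumes "r \<in> tensor_rel scale"
  obtains xs x y ys where "r = fbasis (xs @ [x + y] @ ys) - fbasis (xs @ [x] @ ys) - fbasis (xs @ [y] @ ys)"
  | xs c x ys where "r = fbasis (xs @ [scale c x] @ ys) - fscale c (fbasis (xs @ [x] @ ys))"
proof -
  from assms consider (a) "\<exists>xs x y ys. r = fbasis (xs @ [x + y] @ ys) - fbasis (xs @ [x] @ ys) - fbasis (xs @ [y] @ ys)"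
    | (b) "\<exists>xs c x ys. r = fbasis (xs @ [scale c x] @ ys) - fscale c (fbasis (xs @ [x] @ ys))"
    unfolding tensor_rel_def Un_iff mem_Collect_eq by (elim disjE; simp only: simp_thms)
  then show thesis
  proof cases
    case a then show thesis using that(1) by (elim exE) assumption
  next
    case b then show thesis using that(2) by (elim exE) assumption
  qed
qed

lemma rel1_in: "fbasis (xs @ [x + y] @ ys) - fbasis (xs @ [x] @ ys) - fbasis (xs @ [y] @ ys) \<in> tensor_null scale"
  unfolding tensor_null_def tensor_rel_def
  by (rule fm.span_base, rule UnI1, rule CollectI, (rule exI)+, rule conjI[OF refl TrueI])
lemma rel2_in: "fbasis (xs @ [scale c x] @ ys) - fscale c (fbasis (xs @ [x] @ ys)) \<in> tensor_null scale"
  unfolding tensor_null_def tensor_rel_def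
  by (rule fm.span_base, rule UnI2, rule CollectI, (rule exI)+, rule conjI[OF refl TrueI])

lemma rel_fin: "r \<in> tensor_rel scale \<Longrightarrow> finite (supp r)"
proof (erule rel_cases)
  fix xs x y ys assume "r = fbasis (xs @ [x + y] @ ys) - fbasis (xs @ [x] @ ys) - fbasis (xs @ [y] @ ys)"
  then show ?thesis by (simp only: fin_diff fin_fbasis)
next
  fix xs c x ys assume "r = fbasis (xs @ [scale c x] @ ys) - fscale c (fbasis (xs @ [x] @ ys))"
  then show ?thesis by (simp only: fin_diff fin_fbasis fin_scale)
qed

lemma null_map:
  assumes L: "linf L" and R: "\<And>r. r \<in> tensor_rel scale \<Longrightarrow> L r \<in> tensor_null scale"
    and N: "N \<in> tensor_null scale"
  shows "L N \<in> tensor_null scale"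
proof -
  from N obtain t r where t: "finite t" "t \<subseteq> tensor_rel scale" and Ndef: "N = (\<Sum>a\<in>t. fscale (r a) a)"
    unfolding tensor_null_def fm.span_explicit by blast
  have "L N = (\<Sum>a\<in>t. fscale (r a) (L a))"
    unfolding Ndef using t by (intro linf_sum[OF L]) (auto intro: rel_fin)
  also have "\<dots> \<in> tensor_null scale"
    unfolding tensor_null_def
    using t R unfolding tensor_null_def by (intro fm.span_sum fm.span_scale) auto
  finally show ?thesis .
qed

lemma null_add: "A \<in> tensor_null scale \<Longrightarrow> B \<in> tensor_null scale \<Longrightarrow> A + B \<in> tensor_null scale"
  unfolding tensor_null_def by (rule fm.span_add)
lemma null_diff: "A \<in> tensor_null scale \<Longrightarrow> B \<in> tensor_null scale \<Longrightarrow> A - B \<in> tensor_null scale"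
  unfolding tensor_null_def by (rule fm.span_diff)
lemma null_scale: "A \<in> tensor_null scale \<Longrightarrow> fscale c A \<in> tensor_null scale"
  unfolding tensor_null_def by (rule fm.span_scale)
lemma null_zero: "0 \<in> tensor_null scale"
  unfolding tensor_null_def by (rule fm.span_zero)
lemma null_sum: "(\<And>a. a \<in> A \<Longrightarrow> X a \<in> tensor_null scale) \<Longrightarrow> (\<Sum>a\<in>A. X a) \<in> tensor_null scale"
  unfolding tensor_null_def by (rule fm.span_sum)

lemma teq_refl: "tensor_eq scale F F" by (simp add: tensor_eq_def null_zero)
lemma teq_trans: "tensor_eq scale F G \<Longrightarrow> tensor_eq scale G H \<Longrightarrow> tensor_eq scale F H"
  unfolding tensor_eq_def using null_add by fastforce

lemma basis_expand:
  assumes "finite A" "supp F \<subseteq> A"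
  shows "F = (\<Sum>w\<in>A. fscale (F w) (fbasis w))"
proof
  fix z
  have "(\<Sum>w\<in>A. fscale (F w) (fbasis w)) z = (\<Sum>w\<in>A. F w * (if z = w then 1 else 0))"
    by (simp add: sum_fun_apply fbasis_def fscale_apply)
  also have "\<dots> = (\<Sum>w\<in>A. if w = z then F w else 0)"
    by (intro sum.cong) auto
  also have "\<dots> = (if z \<in> A then F z else 0)"
    using assms(1) by (simp add: sum.delta)
  also have "\<dots> = F z" using assms(2) by (auto simp: supp_def)
  finally show "F z = (\<Sum>w\<in>A. fscale (F w) (fbasis w)) z" by simp
qed


definition E :: "('h \<Rightarrow> ('h list \<Rightarrow> 'k)) \<Rightarrow> 'h list \<Rightarrow> ('h list \<Rightarrow> 'k::field)" where
  "E D w = (if w = [] then 0 else Sx 2 (tl w) (D (hd w)))"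

lemma rep_iff: "F \<in> tensor_rep n \<longleftrightarrow> finite (supp F) \<and> (\<forall>w\<in>supp F. length w = n)"
  by (auto simp: tensor_rep_def supp_def)

lemma Sx_add: "Sx m t (F + G :: 'h list \<Rightarrow> 'k::field) = Sx m t F + Sx m t G"
  by (rule ext) (simp add: Sx_def)
lemma Sx_diff: "Sx m t (F - G :: 'h list \<Rightarrow> 'k::field) = Sx m t F - Sx m t G"
  by (rule ext) (simp add: Sx_def)
lemma Sx_scale: "Sx m t (fscale c F :: 'h list \<Rightarrow> 'k::field) = fscale c (Sx m t F)"
  by (rule ext) (simp add: Sx_def fscale_def)
lemma Sx_linf: "linf (Sx m t :: ('h list \<Rightarrow> 'k::field) \<Rightarrow> _)"
  unfolding linf_def by (simp add: Sx_add Sx_scale)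

lemma Sx_fbasis: "Sx m t (fbasis u :: 'h list \<Rightarrow> 'k::field) = (if length u = m then fbasis (u @ t) else 0)"
proof (rule ext)
  fix zs :: "'h list"
  show "Sx m t (fbasis u) zs = (if length u = m then fbasis (u @ t) else (0 :: 'h list \<Rightarrow> 'k)) zs"
  proof (cases "length u = m")
    case True
    have "(zs = u @ t) \<longleftrightarrow> (m \<le> length zs \<and> drop m zs = t \<and> take m zs = u)"
      using True by (auto simp: append_eq_conv_conj) (metis append_take_drop_id)
    then show ?thesis using True by (auto simp: Sx_def fbasis_def)
  next
    case False
    then show ?thesis by (auto simp: Sx_def fbasis_def)
  qed
qed

lemma Sx_null:
  assumes "N \<in> tensor_null scale"
  shows "Sx m t N \<in> tensor_null scale"
proof (rule null_map[OF Sx_linf _ assms])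
  fix r assume "r \<in> tensor_rel scale"
  then show "Sx m t r \<in> tensor_null scale"
  proof (cases rule: rel_cases)
    case (1 xs x y ys)
    show ?thesis
    proof (cases "length (xs @ [x] @ ys) = m")
      case True
      then show ?thesis unfolding 1 Sx_diff Sx_fbasis using rel1_in[of xs x y "ys @ t" scale] by simp
    next
      case False
      then show ?thesis unfolding 1 Sx_diff Sx_fbasis by (simp add: null_zero)
    qed
  next
    case (2 xs c x ys)
    show ?thesis
    proof (cases "length (xs @ [x] @ ys) = m")
      case True
      then show ?thesis unfolding 2 Sx_diff Sx_scale Sx_fbasis using rel2_in[of xs scale c x "ys @ t"] by simp
    next
      case False
      from False show ?thesis unfolding 2 Sx_diff Sx_scale Sx_fbasis by (simp add: null_zero)
    qed
  qed
qed

lemma supp_Sx: "supp (Sx m t K) \<subseteq> (\<lambda>u. u @ t) ` supp K"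
proof
  fix zs assume "zs \<in> supp (Sx m t K)"
  then have "m \<le> length zs" "drop m zs = t" "K (take m zs) \<noteq> 0"
    by (auto simp: supp_def Sx_def split: if_splits)
  then show "zs \<in> (\<lambda>u. u @ t) ` supp K"
    by (intro image_eqI[of _ _ "take m zs"]) (auto simp: supp_def)
qed

lemma Sx_rep: "K \<in> tensor_rep m \<Longrightarrow> Sx m t K \<in> tensor_rep (m + length t)"
proof -
  assume K: "K \<in> tensor_rep m"
  have "finite (supp (Sx m t K))"
    using K supp_Sx[of m t K] by (meson finite_imageI finite_subset rep_iff)
  moreover have "length w = m + length t" if "w \<in> supp (Sx m t K)" for w
    using supp_Sx[of m t K] that K by (auto simp: rep_iff)
  ultimately show ?thesis by (simp add: rep_iff)
qed

lemma Sx_expand: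
  assumes K: "K \<in> tensor_rep m"
  shows "Sx m t K = (\<Sum>u\<in>supp K. fscale (K u) (fbasis (u @ t)))"
proof -
  have fin: "finite (supp K)" using K by (simp add: rep_iff)
  have "Sx m t K = Sx m t (\<Sum>u\<in>supp K. fscale (K u) (fbasis u))"
    using basis_expand[OF fin subset_refl] by simp
  also have "\<dots> = (\<Sum>u\<in>supp K. fscale (K u) (Sx m t (fbasis u)))"
    by (rule linf_sum[OF Sx_linf fin fin_fbasis])
  also have "\<dots> = (\<Sum>u\<in>supp K. fscale (K u) (fbasis (u @ t)))"
    using K by (intro sum.cong refl) (simp add: rep_iff Sx_fbasis)
  finally show ?thesis .
qed

lemma Sx_Sx:
  assumes sk: "length s = k"
  shows "Sx (m + k) t (Sx m s L) = Sx m (s @ t) L"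
proof (rule ext)
  fix zs :: "'a list"
  have e1: "drop m (take (m + k) zs) = take k (drop m zs)"
    using take_drop[of k m zs] by (simp only: add.commute)
  have e2: "drop (m + k) zs = drop k (drop m zs)"
    by (simp only: drop_drop add.commute)
  have e3: "(drop m zs = s @ t) \<longleftrightarrow> (take k (drop m zs) = s \<and> drop k (drop m zs) = t)"
    using sk append_eq_conv_conj[of s t "drop m zs"] by auto
  show "Sx (m + k) t (Sx m s L) zs = Sx m (s @ t) L zs"
  proof (cases "m + k \<le> length zs")
    case True
    then have "m \<le> length zs" "m \<le> length (take (m + k) zs)" "take m (take (m + k) zs) = take m zs" by auto
    then show ?thesis using True unfolding Sx_def e1 e2 e3 by auto
  next
    case False
    have "\<not> (m \<le> length zs \<and> drop m zs = s @ t)"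
    proof
      assume a: "m \<le> length zs \<and> drop m zs = s @ t"
      then have "length (drop m zs) = k + length t" using sk by simp
      then have "length zs - m = k + length t" by simp
      then show False using False a by arith
    qed
    then show ?thesis using False unfolding Sx_def by auto
  qed
qed

lemma DT_expand:
  assumes fin: "finite A" and sub: "supp F \<subseteq> A"
  shows "delta_tensor_id D F = (\<Sum>w\<in>A. fscale (F w) (E D w))"
proof (rule ext)
  fix zs
  have finF: "finite {ws. F ws \<noteq> 0}" using fin sub by (metis finite_subset supp_def)
  have "delta_tensor_id D F zs = (\<Sum>ws\<in>{ws. F ws \<noteq> 0}. F ws * E D ws zs)"
    unfolding delta_tensor_id_def
    by (intro sum.cong refl) (auto simp: E_def Sx_def)
  also have "\<dots> = (\<Sum>ws\<in>A. F ws * E D ws zs)"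
    using fin sub by (intro sum.mono_neutral_left) (auto simp: supp_def)
  also have "\<dots> = (\<Sum>w\<in>A. fscale (F w) (E D w)) zs"
    by (simp add: sum_fun_apply fscale_def)
  finally show "delta_tensor_id D F zs = (\<Sum>w\<in>A. fscale (F w) (E D w)) zs" .
qed

lemma DT_linf: "linf (delta_tensor_id D)"
  unfolding linf_def
proof (intro conjI allI impI)
  fix F G :: "'a list \<Rightarrow> 'b" assume f: "finite (supp F)" "finite (supp G)"
  have s: "supp (F + G) \<subseteq> supp F \<union> supp G" by (rule supp_add)
  have "delta_tensor_id D (F + G) = (\<Sum>w\<in>supp F \<union> supp G. fscale ((F + G) w) (E D w))"
    using f s by (intro DT_expand) auto
  also have "\<dots> = (\<Sum>w\<in>supp F \<union> supp G. fscale (F w) (E D w)) + (\<Sum>w\<in>supp F \<union> supp G. fscale (G w) (E D w))"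
    by (simp only: plus_fun_apply fm.scale_left_distrib sum.distrib)
  also have "\<dots> = delta_tensor_id D F + delta_tensor_id D G"
  proof -
    have "delta_tensor_id D F = (\<Sum>w\<in>supp F \<union> supp G. fscale (F w) (E D w))"
      using f by (intro DT_expand) auto
    moreover have "delta_tensor_id D G = (\<Sum>w\<in>supp F \<union> supp G. fscale (G w) (E D w))"
      using f by (intro DT_expand) auto
    ultimately show ?thesis by simp
  qed
  finally show "delta_tensor_id D (F + G) = delta_tensor_id D F + delta_tensor_id D G" .
next
  fix c and F :: "'a list \<Rightarrow> 'b" assume f: "finite (supp F)"
  have "delta_tensor_id D (fscale c F) = (\<Sum>w\<in>supp F. fscale (fscale c F w) (E D w))"
    using f supp_scale by (intro DT_expand) auto
  also have "\<dots> = fscale c (\<Sum>w\<in>supp F. fscale (F w) (E D w))"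
    by (simp add: fm.scale_sum_right fscale_apply)
  also have "\<dots> = fscale c (delta_tensor_id D F)"
    using f by (simp add: DT_expand)
  finally show "delta_tensor_id D (fscale c F) = fscale c (delta_tensor_id D F)" .
qed

lemma DT_fbasis: "delta_tensor_id D (fbasis w) = E D w"
proof -
  have "delta_tensor_id D (fbasis w) = (\<Sum>v\<in>{w}. fscale (fbasis w v) (E D v))"
    by (intro DT_expand) (auto simp: supp_fbasis)
  also have "\<dots> = E D w" by (simp add: fbasis_def)
  finally show ?thesis .
qed

lemma DT_basis:
  assumes "finite A" "supp F \<subseteq> A"
  shows "delta_tensor_id D F = (\<Sum>w\<in>A. fscale (F w) (delta_tensor_id D (fbasis w)))"
  using DT_expand[OF assms] by (simp add: DT_fbasis)

lemma rep_sum: "finite A \<Longrightarrow> (\<And>a. a \<in> A \<Longrightarrow> X a \<in> tensor_rep n) \<Longrightarrow> (\<Sum>a\<in>A. fscale (c a) (X a)) \<in> tensor_rep n"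
proof (induction A rule: finite_induct)
  case empty then show ?case by (simp add: rep_iff supp_def)
next
  case (insert x F)
  have a: "fscale (c x) (X x) \<in> tensor_rep n" using insert.prems
    by (auto simp: rep_iff supp_def fscale_def intro: finite_subset[OF supp_scale])
  have b: "(\<Sum>a\<in>F. fscale (c a) (X a)) \<in> tensor_rep n" using insert by auto
  have "fscale (c x) (X x) + (\<Sum>a\<in>F. fscale (c a) (X a)) \<in> tensor_rep n"
    using a b unfolding rep_iff
    by (metis (no_types, lifting) Un_iff fin_add in_mono supp_add)
  then show ?case using insert.hyps by (simp del: plus_fun_apply)
qed

lemma E_rep: "(\<And>x. D x \<in> tensor_rep 2) \<Longrightarrow> length w = Suc m \<Longrightarrow> E D w \<in> tensor_rep (Suc (Suc m))"
  using Sx_rep[of "D (hd w)" 2 "tl w"] by (cases w) (auto simp: E_def)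

lemma DT_rep:
  assumes D_rep: "\<And>x. D x \<in> tensor_rep 2" and F: "F \<in> tensor_rep (Suc m)"
  shows "delta_tensor_id D F \<in> tensor_rep (Suc (Suc m))"
proof -
  have fin: "finite (supp F)" using F by (simp add: rep_iff)
  show ?thesis
    unfolding DT_expand[OF fin subset_refl]
    using F by (intro rep_sum fin E_rep[OF D_rep]) (auto simp: rep_iff)
qed


lemma DT_rel1:
  assumes D_rep: "\<And>x. D x \<in> tensor_rep 2"
    and D_add: "\<And>x y. tensor_eq scale (D (x + y)) (D x + D y)"
  shows "E D (xs @ [x + y] @ ys) - E D (xs @ [x] @ ys) - E D (xs @ [y] @ ys) \<in> tensor_null scale"
proof (cases xs)
  case Nil
  have "E D (xs @ [x + y] @ ys) - E D (xs @ [x] @ ys) - E D (xs @ [y] @ ys)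
        = Sx 2 ys (D (x + y) - (D x + D y))"
    using Nil by (simp add: E_def Sx_diff Sx_add diff_diff_eq del: plus_fun_apply)
  also have "\<dots> \<in> tensor_null scale"
    using D_add by (intro Sx_null) (simp add: tensor_eq_def)
  finally show ?thesis .
next
  case (Cons h xs')
  let ?K = "D h"
  have K: "?K \<in> tensor_rep 2" by (rule D_rep)
  have "E D (xs @ [x + y] @ ys) - E D (xs @ [x] @ ys) - E D (xs @ [y] @ ys)
        = (\<Sum>u\<in>supp ?K. fscale (?K u) (fbasis (u @ xs' @ [x + y] @ ys)))
          - (\<Sum>u\<in>supp ?K. fscale (?K u) (fbasis (u @ xs' @ [x] @ ys)))
          - (\<Sum>u\<in>supp ?K. fscale (?K u) (fbasis (u @ xs' @ [y] @ ys)))"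
    using Cons by (simp add: E_def Sx_expand[OF K])
  also have "\<dots> = (\<Sum>u\<in>supp ?K. fscale (?K u) (fbasis ((u @ xs') @ [x + y] @ ys)
          - fbasis ((u @ xs') @ [x] @ ys) - fbasis ((u @ xs') @ [y] @ ys)))"
    by (simp add: sum_subtractf fm.scale_right_diff_distrib)
  also have "\<dots> \<in> tensor_null scale"
    by (intro null_sum null_scale rel1_in)
  finally show ?thesis .
qed

lemma DT_rel2:
  assumes D_rep: "\<And>x. D x \<in> tensor_rep 2"
    and D_scale: "\<And>c x. tensor_eq scale (D (scale c x)) (fscale c (D x))"
  shows "E D (xs @ [scale c x] @ ys) - fscale c (E D (xs @ [x] @ ys)) \<in> tensor_null scale"
proof (cases xs)
  case Nil
  have "E D (xs @ [scale c x] @ ys) - fscale c (E D (xs @ [x] @ ys))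
        = Sx 2 ys (D (scale c x) - fscale c (D x))"
    using Nil by (simp add: E_def Sx_diff Sx_scale)
  also have "\<dots> \<in> tensor_null scale"
    using D_scale by (intro Sx_null) (simp add: tensor_eq_def)
  finally show ?thesis .
next
  case (Cons h xs')
  let ?K = "D h"
  have K: "?K \<in> tensor_rep 2" by (rule D_rep)
  have "E D (xs @ [scale c x] @ ys) - fscale c (E D (xs @ [x] @ ys))
        = (\<Sum>u\<in>supp ?K. fscale (?K u) (fbasis (u @ xs' @ [scale c x] @ ys)))
          - fscale c (\<Sum>u\<in>supp ?K. fscale (?K u) (fbasis (u @ xs' @ [x] @ ys)))"
    using Cons by (simp add: E_def Sx_expand[OF K])
  also have "\<dots> = (\<Sum>u\<in>supp ?K. fscale (?K u) (fbasis ((u @ xs') @ [scale c x] @ ys)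
          - fscale c (fbasis ((u @ xs') @ [x] @ ys))))"
    by (simp add: sum_subtractf fm.scale_right_diff_distrib fm.scale_sum_right mult.commute)
  also have "\<dots> \<in> tensor_null scale"
    by (intro null_sum null_scale rel2_in)
  finally show ?thesis .
qed

lemma DT_null:
  assumes D_rep: "\<And>x. D x \<in> tensor_rep 2"
    and D_add: "\<And>x y. tensor_eq scale (D (x + y)) (D x + D y)"
    and D_scale: "\<And>c x. tensor_eq scale (D (scale c x)) (fscale c (D x))"
    and N: "N \<in> tensor_null scale"
  shows "delta_tensor_id D N \<in> tensor_null scale"
proof (rule null_map[OF DT_linf _ N])
  fix r assume "r \<in> tensor_rel scale"
  then show "delta_tensor_id D r \<in> tensor_null scale"
  proof (cases rule: rel_cases)
    case (1 xs x y ys)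
    show ?thesis unfolding 1 using DT_rel1[OF D_rep D_add, of xs x y ys]
      by (simp add: linf_diff[OF DT_linf] fin_diff fin_fbasis DT_fbasis)
  next
    case (2 xs c x ys)
    have "delta_tensor_id D (fscale c (fbasis w)) = fscale c (delta_tensor_id D (fbasis w))" for w
      using DT_linf[of D] fin_fbasis[of w] unfolding linf_def by blast
    then have "delta_tensor_id D (fscale c (fbasis (xs @ [x] @ ys))) = fscale c (E D (xs @ [x] @ ys))"
      by (simp only: DT_fbasis)
    then show ?thesis unfolding 2 using DT_rel2[OF D_rep D_scale, of xs c x ys]
      by (simp add: linf_diff[OF DT_linf] fin_scale fin_fbasis DT_fbasis)
  qed
qed

lemma DT_teq:
  assumes D_rep: "\<And>x. D x \<in> tensor_rep 2"
    and D_add: "\<And>x y. tensor_eq scale (D (x + y)) (D x + D y)"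
    and D_scale: "\<And>c x. tensor_eq scale (D (scale c x)) (fscale c (D x))"
    and F: "finite (supp F)" and G: "finite (supp G)" and eq: "tensor_eq scale F G"
  shows "tensor_eq scale (delta_tensor_id D F) (delta_tensor_id D G)"
  using DT_null[OF D_rep D_add D_scale, of "F - G"] eq linf_diff[OF DT_linf F G]
  unfolding tensor_eq_def by simp



definition psi :: "(nat \<Rightarrow> nat) \<Rightarrow> 'h list \<Rightarrow> 'h list" where
  "psi \<sigma> zs = hd zs # permute_list \<sigma> (tl zs)"

lemma P_apply: "id_tensor_perm \<sigma> F zs = (if zs = [] then F [] else F (psi \<sigma> zs))"
  by (simp add: id_tensor_perm_def psi_def)

lemma P_Cons: "id_tensor_perm \<sigma> F (z # r) = F (z # permute_list \<sigma> r)"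
  by (simp add: id_tensor_perm_def)

lemma perm_inv_list:
  assumes "\<sigma> permutes {..<length l}"
  shows "permute_list (inv \<sigma>) (permute_list \<sigma> l) = l"
    and "permute_list \<sigma> (permute_list (inv \<sigma>) l) = l"
proof -
  have i: "inv \<sigma> permutes {..<length l}" using assms by (rule permutes_inv)
  show "permute_list (inv \<sigma>) (permute_list \<sigma> l) = l"
    using permute_list_compose[OF i, of \<sigma>] permutes_inv_o(1)[OF assms] by simp
  show "permute_list \<sigma> (permute_list (inv \<sigma>) l) = l"
    using permute_list_compose[OF assms, of "inv \<sigma>"] permutes_inv_o(2)[OF assms] by simp
qed

lemma perm_eq_iff:
  assumes "\<sigma> permutes {..<n}" "length t = n"
  shows "(permute_list \<sigma> r = t) \<longleftrightarrow> (r = permute_list (inv \<sigma>) t)"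
proof (cases "length r = n")
  case True
  have a: "\<sigma> permutes {..<length r}" "\<sigma> permutes {..<length t}" using True assms by simp_all
  show ?thesis
  proof
    assume "permute_list \<sigma> r = t"
    then show "r = permute_list (inv \<sigma>) t" using perm_inv_list(1)[OF a(1)] by simp
  next
    assume "r = permute_list (inv \<sigma>) t"
    then show "permute_list \<sigma> r = t" using perm_inv_list(2)[OF a(2)] by simp
  qed
next
  case False
  then show ?thesis using assms by auto
qed

lemma P_add: "id_tensor_perm \<sigma> (F + G :: 'h list \<Rightarrow> 'k::field) = id_tensor_perm \<sigma> F + id_tensor_perm \<sigma> G"
  by (rule ext) (simp add: id_tensor_perm_def)
lemma P_diff: "id_tensor_perm \<sigma> (F - G :: 'h list \<Rightarrow> 'k::field) = id_tensor_perm \<sigma> F - id_tensor_perm \<sigma> G"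
  by (rule ext) (simp add: id_tensor_perm_def)
lemma P_scale: "id_tensor_perm \<sigma> (fscale c F :: 'h list \<Rightarrow> 'k::field) = fscale c (id_tensor_perm \<sigma> F)"
  by (rule ext) (simp add: id_tensor_perm_def fscale_def)
lemma P_linf: "linf (id_tensor_perm \<sigma> :: ('h list \<Rightarrow> 'k::field) \<Rightarrow> _)"
  unfolding linf_def by (simp add: P_add P_scale)

lemma P_fbasis:
  assumes \<sigma>: "\<sigma> permutes {..<n}" and u: "length u = Suc n"
  shows "id_tensor_perm \<sigma> (fbasis u :: 'h list \<Rightarrow> 'k::field) = fbasis (psi (inv \<sigma>) u)"
proof (rule ext)
  fix zs :: "'h list"
  obtain a t where ut: "u = a # t" and lt: "length t = n" using u by (cases u) auto
  show "id_tensor_perm \<sigma> (fbasis u :: 'h list \<Rightarrow> 'k) zs = fbasis (psi (inv \<sigma>) u) zs"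
  proof (cases zs)
    case Nil then show ?thesis using ut by (simp add: P_apply fbasis_def psi_def)
  next
    case (Cons z r)
    have "(z # permute_list \<sigma> r = u) \<longleftrightarrow> (z # r = psi (inv \<sigma>) u)"
      using perm_eq_iff[OF \<sigma> lt, of r] ut by (auto simp: psi_def)
    then show ?thesis using Cons by (simp add: P_Cons fbasis_def)
  qed
qed

lemma permute_list_update:
  assumes \<tau>: "\<tau> permutes {..<length l}" and k: "k < length l"
  shows "permute_list \<tau> (l[k := a]) = (permute_list \<tau> l)[inv \<tau> k := a]"
proof (rule nth_equalityI)
  show "length (permute_list \<tau> (l[k := a])) = length ((permute_list \<tau> l)[inv \<tau> k := a])" by simp
next
  fix i assume i: "i < length (permute_list \<tau> (l[k := a]))"
  then have il: "i < length l" by simp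
  have ti: "\<tau> i < length l" using permutes_in_image[OF \<tau>] il by auto
  have "(\<tau> i = k) \<longleftrightarrow> (i = inv \<tau> k)" using permutes_inv_eq[OF \<tau>] by metis
  then show "permute_list \<tau> (l[k := a]) ! i = (permute_list \<tau> l)[inv \<tau> k := a] ! i"
    using il ti \<tau> by (auto simp: permute_list_nth nth_list_update)
qed

lemma psi_update:
  assumes \<tau>: "\<tau> permutes {..<n}" and l: "length l = Suc n" and i: "i < Suc n"
  shows "\<exists>j < Suc n. \<forall>a. psi \<tau> (l[i := a]) = (psi \<tau> l)[j := a]"
proof -
  obtain h t where lt: "l = h # t" and tl: "length t = n" using l by (cases l) auto
  show ?thesis
  proof (cases i)
    case 0
    then show ?thesis using lt by (intro exI[of _ 0]) (simp add: psi_def)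
  next
    case (Suc k)
    have k: "k < length t" using i Suc tl by simp
    have \<tau>': "\<tau> permutes {..<length t}" using \<tau> tl by simp
    have "inv \<tau> k < n" using permutes_in_image[OF permutes_inv[OF \<tau>]] k tl by auto
    then show ?thesis using lt Suc permute_list_update[OF \<tau>' k]
      by (intro exI[of _ "Suc (inv \<tau> k)"]) (simp add: psi_def)
  qed
qed

lemma length_psi [simp]: "length (psi \<sigma> zs) = Suc (length (tl zs))"
  by (simp add: psi_def)

definition Res :: "nat \<Rightarrow> ('h list \<Rightarrow> 'k::zero) \<Rightarrow> ('h list \<Rightarrow> 'k)" where
  "Res L F = (\<lambda>w. if length w = L then F w else 0)"

lemma Res_fbasis: "Res L (fbasis u :: 'h list \<Rightarrow> 'k::field) = (if length u = L then fbasis u else 0)"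
  by (rule ext) (auto simp: Res_def fbasis_def)

lemma P_null:
  fixes N :: "'h::ab_group_add list \<Rightarrow> 'k::field" and scale :: "'k \<Rightarrow> 'h \<Rightarrow> 'h"
  assumes \<sigma>: "\<sigma> permutes {..<n}" and N: "N \<in> tensor_null scale"
    and NL: "\<And>w. N w \<noteq> 0 \<Longrightarrow> length w = Suc n"
  shows "id_tensor_perm \<sigma> N \<in> tensor_null scale"
proof -
  define L :: "('h list \<Rightarrow> 'k) \<Rightarrow> ('h list \<Rightarrow> 'k)" where "L = (\<lambda>F. id_tensor_perm \<sigma> (Res (Suc n) F))"
  have RN: "Res (Suc n) N = N" using NL by (auto simp: Res_def fun_eq_iff)
  have lin: "linf L"
    unfolding linf_def L_def
    by (auto simp: fun_eq_iff id_tensor_perm_def Res_def fscale_def algebra_simps)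
  have sc: "L (fscale c F) = fscale c (L F)" for c F
    unfolding L_def by (auto simp: fun_eq_iff id_tensor_perm_def Res_def fscale_def)
  have \<tau>: "inv \<sigma> permutes {..<n}" using \<sigma> by (rule permutes_inv)
  have Lbad: "L (fbasis w) = 0" if "length w \<noteq> Suc n" for w
    using that unfolding L_def by (simp add: Res_fbasis fun_eq_iff id_tensor_perm_def)
  have Lgood: "\<exists>ps qs. \<forall>v. L (fbasis (xs @ [v] @ ys)) = fbasis (ps @ [v] @ qs)"
    if len: "length (xs @ [x] @ ys) = Suc n" for xs x ys
  proof -
    let ?l = "xs @ [x] @ ys"
    let ?l' = "psi (inv \<sigma>) ?l"
    have i: "length xs < Suc n" using len by simp
    obtain j where j: "j < Suc n" and hj: "\<And>a. psi (inv \<sigma>) (?l[length xs := a]) = ?l'[j := a]"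
      using psi_update[OF \<tau> len i] by blast
    have jl: "j < length ?l'" using j len by simp
    have "L (fbasis (xs @ [v] @ ys)) = fbasis (take j ?l' @ [v] @ drop (Suc j) ?l')" for v
    proof -
      have lv: "length (xs @ [v] @ ys) = Suc n" using len by simp
      have "L (fbasis (xs @ [v] @ ys)) = id_tensor_perm \<sigma> (fbasis (xs @ [v] @ ys))"
        unfolding L_def using lv by (simp add: Res_fbasis)
      also have "\<dots> = fbasis (psi (inv \<sigma>) (xs @ [v] @ ys))" by (rule P_fbasis[OF \<sigma> lv])
      also have "\<dots> = fbasis (psi (inv \<sigma>) (?l[length xs := v]))" by simp
      also have "\<dots> = fbasis (?l'[j := v])" by (simp only: hj)
      also have "\<dots> = fbasis (take j ?l' @ [v] @ drop (Suc j) ?l')"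
        using upd_conv_take_nth_drop[OF jl] by simp
      finally show ?thesis .
    qed
    then show ?thesis by blast
  qed
  have "L N \<in> tensor_null scale"
  proof (rule null_map[OF lin _ N])
    fix r assume "r \<in> tensor_rel scale"
    then show "L r \<in> tensor_null scale"
    proof (cases rule: rel_cases)
      case (1 xs x y ys)
      have "L r = L (fbasis (xs @ [x + y] @ ys)) - L (fbasis (xs @ [x] @ ys)) - L (fbasis (xs @ [y] @ ys))"
        unfolding 1 by (simp only: linf_diff[OF lin] fin_diff fin_fbasis)
      also have "\<dots> \<in> tensor_null scale"
      proof (cases "length (xs @ [x] @ ys) = Suc n")
        case True
        then obtain ps qs where "\<And>v. L (fbasis (xs @ [v] @ ys)) = fbasis (ps @ [v] @ qs)"
          using Lgood by blast
        then show ?thesis by (simp only: rel1_in)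
      next
        case False
        then have "length (xs @ [v] @ ys) \<noteq> Suc n" for v by simp
        then show ?thesis by (simp add: Lbad null_zero)
      qed
      finally show ?thesis .
    next
      case (2 xs c x ys)
      have "L r = L (fbasis (xs @ [scale c x] @ ys)) - fscale c (L (fbasis (xs @ [x] @ ys)))"
        unfolding 2 by (simp only: linf_diff[OF lin] fin_scale fin_fbasis sc)
      also have "\<dots> \<in> tensor_null scale"
      proof (cases "length (xs @ [x] @ ys) = Suc n")
        case True
        then obtain ps qs where "\<And>v. L (fbasis (xs @ [v] @ ys)) = fbasis (ps @ [v] @ qs)"
          using Lgood by blast
        then show ?thesis by (simp only: rel2_in)
      next
        case False
        then have "length (xs @ [v] @ ys) \<noteq> Suc n" for v by simp
        then show ?thesis by (simp add: Lbad null_zero)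
      qed
      finally show ?thesis .
    qed
  qed
  then show ?thesis using RN unfolding L_def by simp
qed

lemma psi_inv:
  assumes \<sigma>: "\<sigma> permutes {..<n}" and l: "length zs = Suc n"
  shows "psi (inv \<sigma>) (psi \<sigma> zs) = zs"
  using l perm_inv_list(1)[of \<sigma> "tl zs"] \<sigma> by (cases zs) (auto simp: psi_def)

lemma P_rep:
  assumes \<sigma>: "\<sigma> permutes {..<n}" and F: "F \<in> tensor_rep (Suc n)"
  shows "id_tensor_perm \<sigma> F \<in> tensor_rep (Suc n)"
proof -
  have F0: "F [] = 0" using F by (auto simp: tensor_rep_def)
  have s: "supp (id_tensor_perm \<sigma> F) \<subseteq> psi (inv \<sigma>) ` supp F"
       and len: "\<forall>w\<in>supp (id_tensor_perm \<sigma> F). length w = Suc n"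
  proof -
    { fix zs assume zs: "zs \<in> supp (id_tensor_perm \<sigma> F)"
      then have ne: "zs \<noteq> []" and nz: "F (psi \<sigma> zs) \<noteq> 0"
        using F0 by (auto simp: supp_def P_apply split: if_splits)
      have "length (psi \<sigma> zs) = Suc n" using nz F by (auto simp: tensor_rep_def)
      then have lz: "length zs = Suc n" using ne by (cases zs) auto
      have "zs \<in> psi (inv \<sigma>) ` supp F"
        using psi_inv[OF \<sigma> lz] nz by (intro image_eqI[of _ _ "psi \<sigma> zs"]) (auto simp: supp_def)
      note lz this }
    then show "supp (id_tensor_perm \<sigma> F) \<subseteq> psi (inv \<sigma>) ` supp F"
      and "\<forall>w\<in>supp (id_tensor_perm \<sigma> F). length w = Suc n" by auto
  qed
  have "finite (supp F)" using F by (simp add: rep_iff)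
  then have "finite (supp (id_tensor_perm \<sigma> F))" using s finite_subset by blast
  then show ?thesis using len by (simp add: rep_iff)
qed

lemma rep_zero_outside: "F \<in> tensor_rep n \<Longrightarrow> length w \<noteq> n \<Longrightarrow> F w = 0"
  by (auto simp: tensor_rep_def)

lemma P_comp:
  assumes \<sigma>: "\<sigma> permutes {..<n}" and \<tau>: "\<tau> permutes {..<n}" and F: "F \<in> tensor_rep (Suc n)"
  shows "id_tensor_perm \<sigma> (id_tensor_perm \<tau> F) = id_tensor_perm (\<sigma> \<circ> \<tau>) F"
proof (rule ext)
  fix zs show "id_tensor_perm \<sigma> (id_tensor_perm \<tau> F) zs = id_tensor_perm (\<sigma> \<circ> \<tau>) F zs"
  proof (cases zs)
    case Nil then show ?thesis by (simp add: id_tensor_perm_def)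
  next
    case (Cons z r)
    show ?thesis
    proof (cases "length r = n")
      case True
      then show ?thesis using Cons permute_list_compose[of \<tau> r \<sigma>] \<tau> by (simp add: P_Cons)
    next
      case False
      then show ?thesis using Cons rep_zero_outside[OF F] by (simp add: P_Cons)
    qed
  qed
qed

lemma P_teq:
  assumes \<sigma>: "\<sigma> permutes {..<n}" and F: "F \<in> tensor_rep (Suc n)" and G: "G \<in> tensor_rep (Suc n)"
    and eq: "tensor_eq scale F G"
  shows "tensor_eq scale (id_tensor_perm \<sigma> F) (id_tensor_perm \<sigma> G)"
proof -
  have "id_tensor_perm \<sigma> (F - G) \<in> tensor_null scale"
    using eq F G by (intro P_null[OF \<sigma>]) (auto simp: tensor_eq_def tensor_rep_def, metis)
  then show ?thesis by (simp add: tensor_eq_def P_diff)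
qed

lemma P_id: "id_tensor_perm id F = F"
  by (rule ext) (simp add: id_tensor_perm_def)

definition shift :: "(nat \<Rightarrow> nat) \<Rightarrow> nat \<Rightarrow> nat" where
  "shift \<sigma> i = (case i of 0 \<Rightarrow> 0 | Suc j \<Rightarrow> Suc (\<sigma> j))"

lemma permute_list_shift: "permute_list (shift \<sigma>) (z # r) = z # permute_list \<sigma> r"
  unfolding permute_list_def shift_def
  by (simp add: map_upt_Suc del: upt_Suc)

lemma perm_from_inj:
  assumes "finite S" "inj_on f S" "f ` S \<subseteq> S" "\<And>x. x \<notin> S \<Longrightarrow> f x = x"
  shows "f permutes S"
  using assms by (intro bij_imp_permutes) (auto simp: bij_betw_def endo_inj_surj)

lemma shift_permutes:
  assumes \<sigma>: "\<sigma> permutes {..<n}"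
  shows "shift \<sigma> permutes {..<Suc n}"
proof (rule perm_from_inj)
  have inj: "inj \<sigma>" by (rule permutes_inj[OF \<sigma>])
  show "inj_on (shift \<sigma>) {..<Suc n}"
  proof (rule inj_onI)
    fix a b assume "shift \<sigma> a = shift \<sigma> b"
    then show "a = b"
    proof (cases a; cases b)
      fix a' b' assume "a = Suc a'" "b = Suc b'" "shift \<sigma> a = shift \<sigma> b"
      then have "\<sigma> a' = \<sigma> b'" by (simp add: shift_def)
      then show "a = b" using injD[OF inj] \<open>a = Suc a'\<close> \<open>b = Suc b'\<close> by blast
    qed (simp_all add: shift_def)
  qed
  show "shift \<sigma> ` {..<Suc n} \<subseteq> {..<Suc n}"
  proof
    fix y assume "y \<in> shift \<sigma> ` {..<Suc n}"
    then obtain a where a: "a < Suc n" "y = shift \<sigma> a" by auto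
    show "y \<in> {..<Suc n}"
    proof (cases a)
      case 0 then show ?thesis using a by (simp add: shift_def)
    next
      case (Suc a')
      then have "a' \<in> {..<n}" using a by simp
      then have "\<sigma> a' < n" using permutes_in_image[OF \<sigma>] by simp
      then show ?thesis using a Suc by (simp add: shift_def)
    qed
  qed
  show "shift \<sigma> x = x" if "x \<notin> {..<Suc n}" for x
  proof -
    have "x \<noteq> 0" using that by auto
    then obtain a' where x: "x = Suc a'" using not0_implies_Suc by blast
    then have "a' \<notin> {..<n}" using that by simp
    then have "\<sigma> a' = a'" using permutes_not_in[OF \<sigma>] by blast
    then show ?thesis using x by (simp add: shift_def)
  qed
qed simp

lemma shift_exists:
  assumes \<rho>: "\<rho> permutes {..<Suc n}" and z: "\<rho> 0 = 0"
  shows "\<exists>\<sigma>. \<sigma> permutes {..<n} \<and> \<rho> = shift \<sigma>"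
proof -
  define \<sigma> where "\<sigma> j = \<rho> (Suc j) - 1" for j
  have inj: "inj \<rho>" by (rule permutes_inj[OF \<rho>])
  have nz: "\<rho> (Suc j) \<noteq> 0" for j
  proof
    assume "\<rho> (Suc j) = 0"
    then have "\<rho> (Suc j) = \<rho> 0" using z by simp
    then show False using injD[OF inj] by blast
  qed
  have sig: "Suc (\<sigma> j) = \<rho> (Suc j)" for j using nz[of j] unfolding \<sigma>_def by simp
  have "\<sigma> permutes {..<n}"
  proof (rule perm_from_inj)
    show "inj_on \<sigma> {..<n}"
    proof (rule inj_onI)
      fix a b assume "\<sigma> a = \<sigma> b"
      then have "\<rho> (Suc a) = \<rho> (Suc b)" using sig by metis
      then show "a = b" using injD[OF inj] by blast
    qed
    show "\<sigma> ` {..<n} \<subseteq> {..<n}"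
    proof
      fix y assume "y \<in> \<sigma> ` {..<n}"
      then obtain a where a: "a < n" "y = \<sigma> a" by auto
      have "Suc a \<in> {..<Suc n}" using a by simp
      then have "\<rho> (Suc a) < Suc n" using permutes_in_image[OF \<rho>] by simp
      then show "y \<in> {..<n}" using a sig[of a] by simp
    qed
    show "\<sigma> x = x" if "x \<notin> {..<n}" for x
    proof -
      have "Suc x \<notin> {..<Suc n}" using that by simp
      then have "\<rho> (Suc x) = Suc x" using permutes_not_in[OF \<rho>] by blast
      then show ?thesis unfolding \<sigma>_def by simp
    qed
  qed simp
  moreover have "\<rho> = shift \<sigma>"
  proof
    fix i show "\<rho> i = shift \<sigma> i"
      by (cases i) (simp_all add: shift_def z sig)
  qed
  ultimately show ?thesis by blast
qed

lemma P_shift_Sx: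
  assumes \<sigma>: "\<sigma> permutes {..<n}" and t: "length t = n"
  shows "id_tensor_perm (shift \<sigma>) (Sx 2 t K) = Sx 2 (permute_list (inv \<sigma>) t) K"
proof (rule ext)
  fix zs show "id_tensor_perm (shift \<sigma>) (Sx 2 t K) zs = Sx 2 (permute_list (inv \<sigma>) t) K zs"
  proof (cases zs)
    case Nil then show ?thesis by (simp add: id_tensor_perm_def Sx_def)
  next
    case (Cons z0 r0)
    show ?thesis
    proof (cases r0)
      case Nil then show ?thesis using Cons by (simp add: P_Cons Sx_def)
    next
      case (Cons z1 r)
      then show ?thesis using \<open>zs = z0 # r0\<close> perm_eq_iff[OF \<sigma> t, of r]
        by (simp add: P_Cons permute_list_shift Sx_def)
    qed
  qed
qed

lemma E_fin: "(\<And>x. D x \<in> tensor_rep 2) \<Longrightarrow> finite (supp (E D w))"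
  by (cases w) (auto simp: E_def rep_iff intro: Sx_rep[THEN iffD1[OF rep_iff], THEN conjunct1])

lemma P_shift_DT:
  assumes D_rep: "\<And>x. D x \<in> tensor_rep 2"
    and \<sigma>: "\<sigma> permutes {..<n}" and F: "F \<in> tensor_rep (Suc n)"
  shows "delta_tensor_id D (id_tensor_perm \<sigma> F) = id_tensor_perm (shift \<sigma>) (delta_tensor_id D F)"
proof -
  have fin: "finite (supp F)" using F by (simp add: rep_iff)
  have lw: "\<And>w. w \<in> supp F \<Longrightarrow> length w = Suc n" using F by (simp add: rep_iff)
  have "id_tensor_perm \<sigma> F = id_tensor_perm \<sigma> (\<Sum>w\<in>supp F. fscale (F w) (fbasis w))"
    using basis_expand[OF fin subset_refl] by simp
  also have "\<dots> = (\<Sum>w\<in>supp F. fscale (F w) (id_tensor_perm \<sigma> (fbasis w)))"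
    by (rule linf_sum[OF P_linf fin fin_fbasis])
  also have "\<dots> = (\<Sum>w\<in>supp F. fscale (F w) (fbasis (psi (inv \<sigma>) w)))"
    using lw by (intro sum.cong refl) (simp add: P_fbasis[OF \<sigma>])
  finally have e1: "id_tensor_perm \<sigma> F = (\<Sum>w\<in>supp F. fscale (F w) (fbasis (psi (inv \<sigma>) w)))" .
  have "delta_tensor_id D (id_tensor_perm \<sigma> F) = (\<Sum>w\<in>supp F. fscale (F w) (E D (psi (inv \<sigma>) w)))"
    unfolding e1 by (simp add: linf_sum[OF DT_linf fin fin_fbasis] DT_fbasis)
  also have "\<dots> = (\<Sum>w\<in>supp F. fscale (F w) (id_tensor_perm (shift \<sigma>) (E D w)))"
  proof (intro sum.cong refl arg_cong[where f="fscale _"])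
    fix w assume "w \<in> supp F"
    then obtain h t where w: "w = h # t" and lt: "length t = n" using lw by (cases w) force+
    show "E D (psi (inv \<sigma>) w) = id_tensor_perm (shift \<sigma>) (E D w)"
    proof -
      have "E D (psi (inv \<sigma>) w) = Sx 2 (permute_list (inv \<sigma>) t) (D h)"
        using w by (simp add: E_def psi_def)
      also have "\<dots> = id_tensor_perm (shift \<sigma>) (Sx 2 t (D h))"
        by (rule P_shift_Sx[OF \<sigma> lt, symmetric])
      also have "\<dots> = id_tensor_perm (shift \<sigma>) (E D w)"
        using w by (simp add: E_def)
      finally show ?thesis .
    qed
  qed
  also have "\<dots> = id_tensor_perm (shift \<sigma>) (\<Sum>w\<in>supp F. fscale (F w) (E D w))"
    by (rule linf_sum[OF P_linf fin E_fin[OF D_rep], symmetric])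
  also have "\<dots> = id_tensor_perm (shift \<sigma>) (delta_tensor_id D F)"
    by (simp add: DT_expand[OF fin subset_refl])
  finally show ?thesis .
qed


abbreviation sw :: "nat \<Rightarrow> nat" where "sw \<equiv> Transposition.transpose 0 1"

lemma permute_list_swap: "permute_list sw (a # b # r) = b # a # r"
proof (rule nth_equalityI)
  show "length (permute_list sw (a # b # r)) = length (b # a # r)" by simp
next
  fix i assume "i < length (permute_list sw (a # b # r))"
  then have il: "i < length (a # b # r)" by simp
  have e: "permute_list sw (a # b # r) ! i = (a # b # r) ! sw i"
    unfolding permute_list_def using il by (simp del: upt_Suc)
  consider "i = 0" | "i = 1" | j where "i = Suc (Suc j)"
    by (metis One_nat_def not0_implies_Suc)
  then show "permute_list sw (a # b # r) ! i = (b # a # r) ! i"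
  proof cases
    case 1 then show ?thesis using e by simp
  next
    case 2 then show ?thesis using e by simp
  next
    case 3
    then have "sw i = i" by (simp add: transpose_def)
    then show ?thesis using e 3 by simp
  qed
qed

lemma permute_list_swap': "permute_list (Transposition.transpose 0 (Suc 0)) (a # b # r) = b # a # r"
  using permute_list_swap by (simp only: One_nat_def)

lemma P_sw_Sx3: "id_tensor_perm sw (Sx 3 t K) = Sx 3 t (id_tensor_perm sw K)"
proof (rule ext)
  fix zs :: "'a list"
  show "id_tensor_perm sw (Sx 3 t K) zs = Sx 3 t (id_tensor_perm sw K) zs"
  proof (cases "length zs < 3")
    case True
    then show ?thesis by (simp add: P_apply Sx_def)
  next
    case False
    then obtain z0 z1 z2 r where zs: "zs = z0 # z1 # z2 # r"
      by (metis Suc_less_eq length_Cons less_Suc0 list.exhaust list.size(3) numeral_3_eq_3 zero_less_Suc)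
    have Sx3: "Sx 3 t X (a0 # a1 # a2 # r) = (if r = t then X [a0, a1, a2] else 0)" for X :: "'a list \<Rightarrow> 'b" and a0 a1 a2
      by (simp add: Sx_def numeral_3_eq_3)
    have p1: "permute_list sw (z1 # z2 # r) = z2 # z1 # r" by (rule permute_list_swap)
    have p2: "permute_list sw [z1, z2] = [z2, z1]" using permute_list_swap[of z1 z2 "[]"] by simp
    show ?thesis unfolding zs P_Cons p1 Sx3 p2 ..
  qed
qed

lemma DT_DT_E:
  assumes D_rep: "\<And>x. D x \<in> tensor_rep 2"
  shows "delta_tensor_id D (E D (g # t)) = Sx 3 t (delta_tensor_id D (D g))"
proof -
  let ?K = "D g"
  have K: "?K \<in> tensor_rep 2" by (rule D_rep)
  have fin: "finite (supp ?K)" and l2: "\<And>u. u \<in> supp ?K \<Longrightarrow> length u = 2" using K by (auto simp: rep_iff)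
  have "delta_tensor_id D (E D (g # t)) = delta_tensor_id D (\<Sum>u\<in>supp ?K. fscale (?K u) (fbasis (u @ t)))"
    by (simp add: E_def Sx_expand[OF K])
  also have "\<dots> = (\<Sum>u\<in>supp ?K. fscale (?K u) (E D (u @ t)))"
    by (simp add: linf_sum[OF DT_linf fin fin_fbasis] DT_fbasis)
  also have "\<dots> = (\<Sum>u\<in>supp ?K. fscale (?K u) (Sx 3 t (E D u)))"
  proof (intro sum.cong refl arg_cong[where f="fscale _"])
    fix u assume "u \<in> supp ?K"
    then obtain a b where u: "u = [a, b]" using l2
      by (metis (no_types) One_nat_def Suc_1 length_0_conv length_Suc_conv)
    show "E D (u @ t) = Sx 3 t (E D u)"
      using Sx_Sx[of "[b]" 1 2 t "D a"] u by (simp add: E_def)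
  qed
  also have "\<dots> = Sx 3 t (\<Sum>u\<in>supp ?K. fscale (?K u) (E D u))"
    by (rule linf_sum[OF Sx_linf fin E_fin[OF D_rep], symmetric])
  also have "\<dots> = Sx 3 t (delta_tensor_id D ?K)"
    by (simp add: DT_expand[OF fin subset_refl])
  finally show ?thesis .
qed

lemma DDG:
  assumes D_rep: "\<And>x. D x \<in> tensor_rep 2" and G: "G \<in> tensor_rep (Suc m)"
  shows "delta_tensor_id D (delta_tensor_id D G)
       = (\<Sum>w\<in>supp G. fscale (G w) (Sx 3 (tl w) (delta_tensor_id D (D (hd w)))))"
proof -
  have fin: "finite (supp G)" and lw: "\<And>w. w \<in> supp G \<Longrightarrow> length w = Suc m" using G by (auto simp: rep_iff)
  have "delta_tensor_id D (delta_tensor_id D G) = delta_tensor_id D (\<Sum>w\<in>supp G. fscale (G w) (E D w))"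
    by (simp add: DT_expand[OF fin subset_refl])
  also have "\<dots> = (\<Sum>w\<in>supp G. fscale (G w) (delta_tensor_id D (E D w)))"
    by (rule linf_sum[OF DT_linf fin E_fin[OF D_rep]])
  also have "\<dots> = (\<Sum>w\<in>supp G. fscale (G w) (Sx 3 (tl w) (delta_tensor_id D (D (hd w)))))"
  proof (intro sum.cong refl arg_cong[where f="fscale _"])
    fix w assume ws: "w \<in> supp G"
    have "w \<noteq> []" using lw[OF ws] by auto
    then obtain h t where w: "w = h # t" by (cases w) auto
    show "delta_tensor_id D (E D w) = Sx 3 (tl w) (delta_tensor_id D (D (hd w)))"
      using DT_DT_E[OF D_rep, where g=h and t=t] w by simp
  qed
  finally show ?thesis .
qed

lemma swap_inv:
  assumes D_rep: "\<And>x. D x \<in> tensor_rep 2"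
    and hyp: "\<And>h. tensor_eq scale (id_tensor_perm sw (delta_tensor_id D (D h))) (delta_tensor_id D (D h))"
    and G: "G \<in> tensor_rep (Suc m)"
  shows "tensor_eq scale (id_tensor_perm sw (delta_tensor_id D (delta_tensor_id D G))) (delta_tensor_id D (delta_tensor_id D G))"
proof -
  have fin: "finite (supp G)" using G by (auto simp: rep_iff)
  let ?X = "\<lambda>w. delta_tensor_id D (D (hd w))"
  have X3: "?X w \<in> tensor_rep 3" for w
    using DT_rep[OF D_rep, of "D (hd w)" 1] D_rep by (simp add: numeral_3_eq_3 numeral_2_eq_2)
  have finS: "finite (supp (Sx 3 (tl w) (?X w)))" for w
    using Sx_rep[OF X3[of w], of "tl w"] by (simp add: rep_iff)
  have "id_tensor_perm sw (delta_tensor_id D (delta_tensor_id D G))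
      = (\<Sum>w\<in>supp G. fscale (G w) (id_tensor_perm sw (Sx 3 (tl w) (?X w))))"
    unfolding DDG[OF D_rep G] by (rule linf_sum[OF P_linf fin finS])
  also have "\<dots> = (\<Sum>w\<in>supp G. fscale (G w) (Sx 3 (tl w) (id_tensor_perm sw (?X w))))"
    by (simp only: P_sw_Sx3)
  finally have e: "id_tensor_perm sw (delta_tensor_id D (delta_tensor_id D G))
      = (\<Sum>w\<in>supp G. fscale (G w) (Sx 3 (tl w) (id_tensor_perm sw (?X w))))" .
  have "id_tensor_perm sw (delta_tensor_id D (delta_tensor_id D G)) - delta_tensor_id D (delta_tensor_id D G)
      = (\<Sum>w\<in>supp G. fscale (G w) (Sx 3 (tl w) (id_tensor_perm sw (?X w) - ?X w)))"
    apply (subst e)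
    apply (subst DDG[OF D_rep G])
    by (simp add: sum_subtractf fm.scale_right_diff_distrib Sx_diff)
  also have "\<dots> \<in> tensor_null scale"
    using hyp unfolding tensor_eq_def by (intro null_sum null_scale Sx_null) auto
  finally show ?thesis unfolding tensor_eq_def .
qed

lemma iter_Suc: "1 \<le> n \<Longrightarrow> iter_coprod D (Suc n) x = delta_tensor_id D (iter_coprod D n x)"
  by (cases n) (simp_all add: iter_coprod_def)

lemma iter_1: "iter_coprod D 1 x = D x"
  by (simp add: iter_coprod_def)

lemma iter_2: "iter_coprod D 2 x = delta_tensor_id D (D x)"
  by (simp add: iter_coprod_def numeral_2_eq_2)

lemma iter_rep:
  assumes D_rep: "\<And>x. D x \<in> tensor_rep 2"
  shows "iter_coprod D (Suc k) x \<in> tensor_rep (Suc (Suc k))"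
proof (induction k)
  case 0 then show ?case using D_rep by (simp add: iter_coprod_def numeral_2_eq_2)
next
  case (Suc k)
  then show ?case using DT_rep[OF D_rep Suc.IH] by (simp add: iter_Suc)
qed

lemma comp_inv:
  assumes F: "F \<in> tensor_rep (Suc n)" and \<alpha>: "\<alpha> permutes {..<n}" and \<beta>: "\<beta> permutes {..<n}"
    and a: "tensor_eq scale (id_tensor_perm \<alpha> F) F" and b: "tensor_eq scale (id_tensor_perm \<beta> F) F"
  shows "tensor_eq scale (id_tensor_perm (\<alpha> \<circ> \<beta>) F) F"
proof -
  have "id_tensor_perm (\<alpha> \<circ> \<beta>) F = id_tensor_perm \<alpha> (id_tensor_perm \<beta> F)"
    by (rule P_comp[OF \<alpha> \<beta> F, symmetric])
  moreover have "tensor_eq scale (id_tensor_perm \<alpha> (id_tensor_perm \<beta> F)) (id_tensor_perm \<alpha> F)"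
    by (rule P_teq[OF \<alpha> P_rep[OF \<beta> F] F b])
  ultimately show ?thesis using a teq_trans by metis
qed


theorem lemma3p1:
  fixes scale :: "'k::field_char_0 \<Rightarrow> 'h::ab_group_add \<Rightarrow> 'h"
    and D :: "'h \<Rightarrow> ('h list \<Rightarrow> 'k)"
  assumes vs: "vector_space scale"
    and D_rep: "\<And>x. D x \<in> tensor_rep 2"
    and D_add: "\<And>x y. tensor_eq scale (D (x + y)) (D x + D y)"
    and D_scale: "\<And>c x. tensor_eq scale (D (scale c x)) (fscale c (D x))"
    and coassoc_sym: "\<And>x. tensor_eq scale
          (id_tensor_perm (Transposition.transpose 0 1) (iter_coprod D 2 x)) (iter_coprod D 2 x)"
  shows "\<forall>n \<ge> 1. \<forall>\<sigma>. \<sigma> permutes {..<n} \<longrightarrow>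
          (\<forall>x. tensor_eq scale (id_tensor_perm \<sigma> (iter_coprod D n x)) (iter_coprod D n x))"
proof -
  have Q: "\<forall>\<sigma>. \<sigma> permutes {..<Suc k} \<longrightarrow>
      (\<forall>x. tensor_eq scale (id_tensor_perm \<sigma> (iter_coprod D (Suc k) x)) (iter_coprod D (Suc k) x))" for k
  proof (induction k)
    case 0
    show ?case
    proof (intro allI impI)
      fix \<sigma> x assume "\<sigma> permutes {..<Suc 0}"
      then have "\<sigma> = id" by (simp add: lessThan_Suc)
      then show "tensor_eq scale (id_tensor_perm \<sigma> (iter_coprod D (Suc 0) x)) (iter_coprod D (Suc 0) x)"
        by (simp add: P_id teq_refl)
    qed
  next
    case (Suc k)
    show ?case
    proof (intro allI impI)
      fix \<sigma> x assume \<sigma>: "\<sigma> permutes {..<Suc (Suc k)}"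
      let ?G = "iter_coprod D (Suc k) x"
      let ?F = "iter_coprod D (Suc (Suc k)) x"
      have G: "?G \<in> tensor_rep (Suc (Suc k))" by (rule iter_rep[OF D_rep])
      have F: "?F \<in> tensor_rep (Suc (Suc (Suc k)))" by (rule iter_rep[OF D_rep])
      have FG: "?F = delta_tensor_id D ?G" by (simp add: iter_Suc)
      have A: "tensor_eq scale (id_tensor_perm \<rho> ?F) ?F"
        if \<rho>: "\<rho> permutes {..<Suc (Suc k)}" and z: "\<rho> 0 = 0" for \<rho>
      proof -
        obtain \<tau> where \<tau>: "\<tau> permutes {..<Suc k}" and r: "\<rho> = shift \<tau>"
          using shift_exists[OF \<rho> z] by blast
        have e: "id_tensor_perm \<rho> ?F = delta_tensor_id D (id_tensor_perm \<tau> ?G)"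
          unfolding FG r by (rule P_shift_DT[OF D_rep \<tau> G, symmetric])
        have "tensor_eq scale (delta_tensor_id D (id_tensor_perm \<tau> ?G)) (delta_tensor_id D ?G)"
          using Suc.IH \<tau> P_rep[OF \<tau> G] G by (intro DT_teq[OF D_rep D_add D_scale]) (auto simp: rep_iff)
        then show ?thesis by (subst e, subst FG, assumption)
      qed
      have B: "tensor_eq scale (id_tensor_perm sw ?F) ?F"
      proof (cases k)
        case 0
        then show ?thesis using coassoc_sym[of x] by (simp add: numeral_2_eq_2)
      next
        case (Suc k')
        have G': "iter_coprod D (Suc k') x \<in> tensor_rep (Suc (Suc k'))" by (rule iter_rep[OF D_rep])
        have FF: "?F = delta_tensor_id D (delta_tensor_id D (iter_coprod D (Suc k') x))"
          using Suc by (simp add: iter_Suc)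
        have hyp: "\<And>h. tensor_eq scale (id_tensor_perm sw (delta_tensor_id D (D h))) (delta_tensor_id D (D h))"
          using coassoc_sym by (simp only: iter_2)
        show ?thesis unfolding FF by (rule swap_inv[OF D_rep hyp G'])
      qed
      show "tensor_eq scale (id_tensor_perm \<sigma> ?F) ?F"
      proof (cases "\<sigma> 0 = 0")
        case True then show ?thesis using A[OF \<sigma>] by simp
      next
        case False
        define k0 where "k0 = \<sigma> 0"
        have k0: "k0 < Suc (Suc k)" using permutes_in_image[OF \<sigma>, of 0] unfolding k0_def by simp
        define \<rho>1 where "\<rho>1 = Transposition.transpose 1 k0"
        define \<rho>2 where "\<rho>2 = sw \<circ> \<rho>1 \<circ> \<sigma>"
        have p1: "\<rho>1 permutes {..<Suc (Suc k)}" unfolding \<rho>1_def using k0 by (intro permutes_swap_id) auto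
        have psw: "sw permutes {..<Suc (Suc k)}" by (intro permutes_swap_id) auto
        have p2: "\<rho>2 permutes {..<Suc (Suc k)}"
          unfolding \<rho>2_def by (rule permutes_compose[OF \<sigma> permutes_compose[OF p1 psw]])
        have z1: "\<rho>1 0 = 0" using False unfolding \<rho>1_def k0_def by (simp add: transpose_def)
        have z2: "\<rho>2 0 = 0" unfolding \<rho>2_def \<rho>1_def k0_def by (simp add: transpose_def)
        have eq: "\<sigma> = \<rho>1 \<circ> (sw \<circ> \<rho>2)" unfolding \<rho>2_def by (rule ext) (simp add: \<rho>1_def)
        have "tensor_eq scale (id_tensor_perm (sw \<circ> \<rho>2) ?F) ?F"
          by (rule comp_inv[OF F psw p2 B A[OF p2 z2]])
        then have "tensor_eq scale (id_tensor_perm (\<rho>1 \<circ> (sw \<circ> \<rho>2)) ?F) ?F"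
          by (intro comp_inv[OF F p1 permutes_compose[OF p2 psw] A[OF p1 z1]])
        then show ?thesis using eq by simp
      qed
    qed
  qed
  show ?thesis
  proof (intro allI impI)
    fix n :: nat and \<sigma> x assume n: "n \<ge> 1" and \<sigma>: "\<sigma> permutes {..<n}"
    obtain k where "n = Suc k" using n by (cases n) auto
    then show "tensor_eq scale (id_tensor_perm \<sigma> (iter_coprod D n x)) (iter_coprod D n x)"
      using Q \<sigma> by blast
  qed
qed

end
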